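(* Let $N\ge1$, $S_N=\mathbb Z\cap[-N,N]$, $\beta\le2$, $\lambda=(\lambda_j)_{j\ge1}\in\ell^\beta$ and $(f_j)_{j\ge1}$ an orthonormal system in $L^2(\mathbf T)$. Then, with $C$ independent of $N$, $\lambda$, $(f_j)$, $$\Big\|\sum_{j=1}^\infty\lambda_j|\mathscr D_Nf_j|^2\Big\|_{L_t^2L_x^\infty(\mathbf T\times\mathbf T)}\le CN^{1/2}\|\lambda\|_{\ell^\beta}.$$
   Context: $\mathbf T=[0,2\pi)$, $\mathscr F_xf(k)=\frac1{2\pi}\int_{\mathbf T}e^{-ixk}f(x)\,dx$, and $\mathscr D_Nf(t,x)=\frac1{2\pi}\sum_{n\in S_N}\mathscr F_xf(n)e^{i(xn+t\sqrt{n^2+n^4})}$. *)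

theory Defs
  imports "HOL-Analysis.Analysis" "HOL-Probability.Essential_Supremum"
begin

definition torus :: "real set" where
  "torus = {0..<2*pi}"

definition fourier_coeff :: "(real \<Rightarrow> complex) \<Rightarrow> int \<Rightarrow> complex" where
  "fourier_coeff f k =
     (1 / (2 * pi)) * (LINT x:torus|lborel. exp (- \<i> * of_real x * of_int k) * f x)"

definition S_set :: "nat \<Rightarrow> int set" where
  "S_set N = {- int N .. int N}"

definition D_op :: "nat \<Rightarrow> (real \<Rightarrow> complex) \<Rightarrow> real \<Rightarrow> real \<Rightarrow> complex" where
  "D_op N f t x = (1 / (2 * pi)) *
     (\<Sum>n\<in>S_set N. fourier_coeff f n *
        exp (\<i> * of_real (x * of_int n + t * sqrt (of_int n ^ 2 + of_int n ^ 4))))"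

definition orthonormal_system :: "(nat \<Rightarrow> real \<Rightarrow> complex) \<Rightarrow> bool" where
  "orthonormal_system f \<longleftrightarrow>
     (\<forall>j. f j \<in> borel_measurable lborel \<and>
          set_integrable lborel torus (\<lambda>x. (norm (f j x))\<^sup>2)) \<and>
     (\<forall>j k. (LINT x:torus|lborel. f j x * cnj (f k x)) = (if j = k then 1 else 0))"

definition in_lp :: "real \<Rightarrow> (nat \<Rightarrow> real) \<Rightarrow> bool" where
  "in_lp \<beta> lam \<longleftrightarrow> summable (\<lambda>j. \<bar>lam j\<bar> powr \<beta>)"

definition lp_norm :: "real \<Rightarrow> (nat \<Rightarrow> real) \<Rightarrow> real" where
  "lp_norm \<beta> lam = (\<Sum>j. \<bar>lam j\<bar> powr \<beta>) powr (1 / \<beta>)"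

definition L2Linf_norm_sq :: "(real \<Rightarrow> real \<Rightarrow> real) \<Rightarrow> ennreal" where
  "L2Linf_norm_sq F =
     (\<integral>\<^sup>+ t. indicator torus t *
        (esssup (restrict_space lborel torus) (\<lambda>x. ennreal \<bar>F t x\<bar>))\<^sup>2 \<partial>lborel)"

end

theory Submission
  imports Defs
begin


definition om :: "int \<Rightarrow> real" where "om n = sqrt (of_int n ^ 2 + of_int n ^ 4)"

lemma om_bounds:
  assumes "\<bar>n\<bar> \<ge> 1"
  shows "of_int n^2 + 1/4 \<le> om n \<and> om n \<le> of_int n ^2 + 1/2"
proof -
  have "(1::real) \<le> \<bar>of_int n\<bar>" using assms by (simp add: of_int_abs[symmetric] del: of_int_abs)
  from one_le_power[OF this, of 2] have n2: "(of_int n::real)^2 \<ge> 1" by simp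
  have a: "(of_int n^2 + 1/4)^2 \<le> (of_int n ^ 2 + of_int n ^ 4::real)"
    using n2 by (simp add: power2_eq_square power4_eq_xxxx algebra_simps) 
  have b: "(of_int n ^ 2 + of_int n ^ 4::real) \<le> (of_int n^2 + 1/2)^2"
    by (simp add: power2_eq_square power4_eq_xxxx algebra_simps)
  have "of_int n^2 + 1/4 \<le> sqrt (of_int n ^ 2 + of_int n ^ 4)" by (rule real_le_rsqrt[OF a])
  moreover have "sqrt (of_int n ^ 2 + of_int n ^ 4) \<le> of_int n^2 + 1/2" by (rule real_le_lsqrt[OF _ b]) simp
  ultimately show ?thesis unfolding om_def by simp
qed

lemma om_neg: "om (-n) = om n" by (simp add: om_def)

lemma om_second: "om (n+1) - 2* om n + om (n-1) \<ge> 1"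
proof -
  consider "n = 0" | "n = 1" | "n = -1" | "\<bar>n\<bar> \<ge> 2" by linarith
  then show ?thesis
  proof cases
    case 1
    have "om 1 = sqrt 2" by (simp add: om_def)
    moreover have "om (-1) = sqrt 2" by (simp add: om_def)
    moreover have "om 0 = 0" by (simp add: om_def)
    ultimately have "om (n+1) - 2 * om n + om (n-1) = 2 * sqrt 2" using 1 by simp
    moreover have "sqrt 2 \<ge> (1::real)" by simp
    ultimately show ?thesis by linarith
  next
    case 2
    have "om 2 = sqrt 20" by (simp add: om_def)
    moreover have "om 1 = sqrt 2" by (simp add: om_def)
    moreover have "om 0 = 0" by (simp add: om_def)
    moreover have "sqrt 20 - 2 * sqrt 2 \<ge> (1::real)"
    proof -
      have "sqrt 2 \<le> (11/4::real)" by (rule real_le_lsqrt) (simp_all add: power2_eq_square)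
      then have "(1 + 2* sqrt 2)^2 \<le> (20::real)" by (simp add: power2_eq_square algebra_simps)
      then have "1 + 2* sqrt 2 \<le> sqrt (20::real)" by (simp add: real_le_rsqrt)
      then show ?thesis by simp
    qed
    ultimately show ?thesis using 2 by simp
  next
    case 3
    have "om (-2) = sqrt 20" by (simp add: om_def)
    moreover have "om (-1) = sqrt 2" by (simp add: om_def)
    moreover have "om 0 = 0" by (simp add: om_def)
    moreover have "sqrt 20 - 2 * sqrt 2 \<ge> (1::real)"
    proof -
      have "sqrt 2 \<le> (11/4::real)" by (rule real_le_lsqrt) (simp_all add: power2_eq_square)
      then have "(1 + 2* sqrt 2)^2 \<le> (20::real)" by (simp add: power2_eq_square algebra_simps)
      then have "1 + 2* sqrt 2 \<le> sqrt (20::real)" by (simp add: real_le_rsqrt)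
      then show ?thesis by simp
    qed
    ultimately show ?thesis using 3 by simp
  next
    case 4
    have "\<bar>n+1\<bar> \<ge> 1" "\<bar>n-1\<bar> \<ge> 1" "\<bar>n\<bar> \<ge> 1" using 4 by auto
    from om_bounds[OF this(1)] om_bounds[OF this(2)] om_bounds[OF this(3)]
    show ?thesis by (simp add: power2_eq_square algebra_simps)
  qed
qed

lemma int_incr:
  fixes g :: "int \<Rightarrow> real"
  assumes "\<And>n. g (n+1) - g n \<ge> c" and "n \<le> m"
  shows "g m - g n \<ge> c * of_int (m - n)"
  using assms(2)
proof (induction m rule: int_ge_induct)
  case base then show ?case by simp
next
  case (step i)
  have "g (i+1) - g n = (g (i+1) - g i) + (g i - g n)" by simp
  also have "\<dots> \<ge> c + c * of_int (i - n)" using assms(1)[of i] step by linarith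
  finally show ?case by (simp add: algebra_simps)
qed

definition dd :: "int \<Rightarrow> real" where "dd n = om (n+1) - om n"

lemma dd_incr: "n \<le> m \<Longrightarrow> dd m - dd n \<ge> of_int (m - n)"
proof -
  assume nm: "n \<le> m"
  have "\<And>i. dd (i+1) - dd i \<ge> 1"
  proof -
    fix i
    have "dd (i+1) - dd i = om ((i+1)+1) - 2* om (i+1) + om ((i+1)-1)" by (simp add: dd_def)
    then show "dd (i+1) - dd i \<ge> 1" using om_second[of "i+1"] by linarith
  qed
  from int_incr[where g=dd and c=1, OF this nm] show ?thesis by simp
qed

definition alpha :: "int \<Rightarrow> int \<Rightarrow> real" where "alpha k n = om n - om (n - k)"

lemma alpha_sep: "\<bar>alpha k n - alpha k n'\<bar> \<ge> of_int (\<bar>k\<bar> * \<bar>n - n'\<bar>)"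
proof -
  have step: "alpha k (i+1) - alpha k i = dd i - dd (i - k)" for i
    by (simp add: alpha_def dd_def algebra_simps)
  have main: "alpha k m - alpha k n \<ge> of_int k * of_int (m - n)" if "n \<le> m" "k \<ge> 0" for m n
  proof -
    have "\<And>i. alpha k (i+1) - alpha k i \<ge> of_int k"
    proof -
      fix i show "alpha k (i+1) - alpha k i \<ge> of_int k"
        using dd_incr[of "i - k" i] step[of i] that(2) by simp
    qed
    from int_incr[where g="alpha k", OF this that(1)] show ?thesis .
  qed
  have main2: "alpha k n - alpha k m \<ge> - of_int k * of_int (m - n)" if "n \<le> m" "k \<le> 0" for m n
  proof -
    have "\<And>i. (- alpha k (i+1)) - (- alpha k i) \<ge> - of_int k"
    proof -
      fix i show "(- alpha k (i+1)) - (- alpha k i) \<ge> - of_int k"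
        using dd_incr[of i "i - k"] step[of i] that(2) by simp
    qed
    from int_incr[where g="\<lambda>i. - alpha k i", OF this that(1)] show ?thesis by simp
  qed
  show ?thesis
  proof (cases "n' \<le> n")
    case True
    show ?thesis
    proof (cases "k \<ge> 0")
      case True
      with main[OF \<open>n' \<le> n\<close> True] \<open>n' \<le> n\<close> show ?thesis by (simp add: abs_if)
    next
      case False
      with main2[OF \<open>n' \<le> n\<close>] \<open>n' \<le> n\<close> show ?thesis by (simp add: abs_if)
    qed
  next
    case False
    then have le: "n \<le> n'" by simp
    show ?thesis
    proof (cases "k \<ge> 0")
      case True
      with main[OF le True] le show ?thesis by (simp add: abs_if)
    next
      case False
      with main2[OF le] le show ?thesis by (simp add: abs_if)
    qed
  qed
qed


definition II :: "real \<Rightarrow> complex" where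
  "II g = integral {0..2* pi} (\<lambda>t. exp (\<i> * of_real (t* g)))"

lemma II_cont: "continuous_on S (\<lambda>t. exp (\<i> * of_real (t* g)))"
  by (intro continuous_intros)

lemma II_integrable: "(\<lambda>t. exp (\<i> * of_real (t* g))) integrable_on {0..2* pi}"
  by (rule integrable_continuous_interval) (rule II_cont)

lemma II_has: "((\<lambda>t. exp (\<i> * of_real (t* g))) has_integral II g) {0..2* pi}"
  unfolding II_def using II_integrable by (rule integrable_integral)

lemma II_le1: "norm (II g) \<le> 2* pi"
proof -
  have "norm (II g) \<le> 1 * measure lborel (cbox 0 (2* pi))"
    by (rule has_integral_bound[where f="(\<lambda>t. exp (\<i> * of_real (t* g)))"]) (use II_has in auto)
  then show ?thesis by simp
qed

lemma II_formula:
  assumes "g \<noteq> 0"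
  shows "II g = (exp (\<i> * of_real (2* pi* g)) - 1) / (\<i> * of_real g)"
proof -
  let ?A = "\<i> * of_real g"
  have d: "((\<lambda>t. exp (t *\<^sub>R ?A) / ?A) has_vector_derivative exp (t *\<^sub>R ?A)) (at t within {0..2* pi})" for t
  proof -
    have "((\<lambda>t. exp (t *\<^sub>R ?A)) has_vector_derivative exp (t *\<^sub>R ?A) * ?A) (at t within {0..2* pi})"
      by (rule exp_scaleR_has_vector_derivative_right)
    from has_vector_derivative_mult_left[OF this, of "inverse ?A"] 
    show ?thesis using assms by (simp add: field_simps)
  qed
  have "((\<lambda>t. exp (t *\<^sub>R ?A)) has_integral (exp ((2* pi) *\<^sub>R ?A) / ?A - exp (0 *\<^sub>R ?A) / ?A)) {0..2* pi}"
    by (rule fundamental_theorem_of_calculus) (use d in auto)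
  moreover have "(\<lambda>t. exp (t *\<^sub>R ?A)) = (\<lambda>t. exp (\<i> * of_real (t* g)))"
    by (auto simp: scaleR_conv_of_real algebra_simps)
  ultimately have "((\<lambda>t. exp (\<i> * of_real (t* g))) has_integral (exp ((2* pi) *\<^sub>R ?A) / ?A - exp (0 *\<^sub>R ?A) / ?A)) {0..2* pi}"
    by simp
  from has_integral_unique[OF II_has this] show ?thesis
    by (simp add: scaleR_conv_of_real diff_divide_distrib algebra_simps)
qed

lemma II_le2:
  assumes "g \<noteq> 0"
  shows "norm (II g) \<le> 2 / \<bar>g\<bar>"
proof -
  have "norm (exp (\<i> * of_real (2* pi* g)) - 1) \<le> 2"
    using norm_triangle_ineq4[of "exp (\<i> * of_real (2* pi* g))" 1] by simp
  moreover have "norm (\<i> * of_real g) = \<bar>g\<bar>" by (simp add: norm_mult)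
  ultimately show ?thesis using assms
    by (simp add: II_formula norm_divide divide_right_mono)
qed

lemma II_int:
  assumes "m \<noteq> 0"
  shows "II (of_int m) = 0"
proof -
  have "exp (\<i> * of_real (2* pi* of_int m)) = 1"
  proof -
    have "exp (\<i> * of_real (2 * pi * of_int m)) = exp ((2 * of_int m * pi) * \<i>)" by (simp add: mult_ac)
    also have "\<dots> = 1" by (rule exp_integer_2pi) simp
    finally show ?thesis .
  qed
  then show ?thesis using assms by (simp add: II_formula)
qed

lemma II_0: "II 0 = 2 * pi"
  unfolding II_def by (simp add: scaleR_conv_of_real)


definition L2 :: "(real \<Rightarrow> complex) \<Rightarrow> bool" where
  "L2 g \<longleftrightarrow> g \<in> borel_measurable lborel \<and> set_integrable lborel torus (\<lambda>x. (norm (g x))\<^sup>2)"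

definition ip :: "(real \<Rightarrow> complex) \<Rightarrow> (real \<Rightarrow> complex) \<Rightarrow> complex" where
  "ip g h = (LINT x:torus|lborel. g x * cnj (h x))"

lemma torus_sets[measurable]: "torus \<in> sets lborel" unfolding torus_def by simp

lemma meas_cnj[measurable]: "h \<in> borel_measurable M \<Longrightarrow> (\<lambda>x. cnj (h x)) \<in> borel_measurable M"
  by (rule measurable_compose[where g=cnj]) (auto intro!: borel_measurable_continuous_onI continuous_intros)

lemma ab_le: "0 \<le> a \<Longrightarrow> 0 \<le> b \<Longrightarrow> (a::real)* b \<le> a\<^sup>2 + b\<^sup>2"
proof -
  assume "0 \<le> a" "0 \<le> b"
  have "0 \<le> (a-b)\<^sup>2" by simp
  then have "2* a* b \<le> a\<^sup>2 + b\<^sup>2" by (simp add: power2_eq_square algebra_simps)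
  moreover have "0 \<le> a* b" using \<open>0 \<le> a\<close> \<open>0 \<le> b\<close> by simp
  ultimately show ?thesis by linarith
qed

lemma ab_sq_le: "((a::real)+b)\<^sup>2 \<le> 2* a\<^sup>2 + 2* b\<^sup>2"
proof -
  have "0 \<le> (a-b)\<^sup>2" by simp
  then show ?thesis by (simp add: power2_eq_square algebra_simps)
qed

lemma L2_ip_int:
  assumes "L2 g" "L2 h"
  shows "set_integrable lborel torus (\<lambda>x. g x * cnj (h x))"
proof (rule set_integrable_bound[where f="\<lambda>x. (norm (g x))\<^sup>2 + (norm (h x))\<^sup>2"])
  show "set_integrable lborel torus (\<lambda>x. (norm (g x))\<^sup>2 + (norm (h x))\<^sup>2)"
    using assms unfolding L2_def by (intro set_integral_add) auto
  have [measurable]: "g \<in> borel_measurable lborel" "h \<in> borel_measurable lborel"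
    using assms unfolding L2_def by auto
  show "set_borel_measurable lborel torus (\<lambda>x. g x * cnj (h x))"
    unfolding set_borel_measurable_def by measurable
  show "AE x in lborel. x \<in> torus \<longrightarrow> norm (g x * cnj (h x)) \<le> norm ((norm (g x))\<^sup>2 + (norm (h x))\<^sup>2)"
  proof (intro AE_I2 impI)
    fix x
    have "norm (g x * cnj (h x)) = norm (g x) * norm (h x)" by (simp add: norm_mult)
    also have "\<dots> \<le> (norm (g x))\<^sup>2 + (norm (h x))\<^sup>2"
      by (rule ab_le) auto
    finally show "norm (g x * cnj (h x)) \<le> norm ((norm (g x))\<^sup>2 + (norm (h x))\<^sup>2)" by simp
  qed
qed

lemma L2_cont:
  assumes "continuous_on UNIV g"
  shows "L2 g"
  unfolding L2_def
proof
  show "g \<in> borel_measurable lborel"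
    using borel_measurable_continuous_onI[OF assms] by simp
  have "integrable lborel (\<lambda>x. indicator {0..2* pi} x *\<^sub>R (norm (g x))\<^sup>2)"
    by (rule borel_integrable_compact) (auto intro!: continuous_intros continuous_on_subset[OF assms])
  then have "set_integrable lborel {0..2* pi} (\<lambda>x. (norm (g x))\<^sup>2)"
    unfolding set_integrable_def .
  then show "set_integrable lborel torus (\<lambda>x. (norm (g x))\<^sup>2)"
    by (rule set_integrable_subset) (auto simp: torus_def)
qed

lemma L2_add:
  assumes "L2 g" "L2 h"
  shows "L2 (\<lambda>x. g x + h x)"
  unfolding L2_def
proof
  have [measurable]: "g \<in> borel_measurable lborel" "h \<in> borel_measurable lborel"
    using assms unfolding L2_def by auto
  show "(\<lambda>x. g x + h x) \<in> borel_measurable lborel" by measurable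
  show "set_integrable lborel torus (\<lambda>x. (norm (g x + h x))\<^sup>2)"
  proof (rule set_integrable_bound[where f="\<lambda>x. 2*(norm (g x))\<^sup>2 + 2*(norm (h x))\<^sup>2"])
    show "set_integrable lborel torus (\<lambda>x. 2*(norm (g x))\<^sup>2 + 2*(norm (h x))\<^sup>2)"
      using assms unfolding L2_def by (intro set_integral_add) auto
    show "set_borel_measurable lborel torus (\<lambda>x. (norm (g x + h x))\<^sup>2)"
      unfolding set_borel_measurable_def by measurable
    show "AE x in lborel. x \<in> torus \<longrightarrow> norm ((norm (g x + h x))\<^sup>2) \<le> norm (2*(norm (g x))\<^sup>2 + 2*(norm (h x))\<^sup>2)"
    proof (intro AE_I2 impI)
      fix x
      have "norm (g x + h x) \<le> norm (g x) + norm (h x)" by (rule norm_triangle_ineq)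
      then have "(norm (g x + h x))\<^sup>2 \<le> (norm (g x) + norm (h x))\<^sup>2"
        by (simp add: power_mono)
      also have "\<dots> \<le> 2*(norm (g x))\<^sup>2 + 2*(norm (h x))\<^sup>2"
        by (rule ab_sq_le)
      finally show "norm ((norm (g x + h x))\<^sup>2) \<le> norm (2*(norm (g x))\<^sup>2 + 2*(norm (h x))\<^sup>2)" by simp
    qed
  qed
qed

lemma L2_mult:
  assumes "L2 g"
  shows "L2 (\<lambda>x. c * g x)"
  unfolding L2_def
proof
  have [measurable]: "g \<in> borel_measurable lborel"
    using assms unfolding L2_def by auto
  show "(\<lambda>x. c * g x) \<in> borel_measurable lborel" by measurable
  have "set_integrable lborel torus (\<lambda>x. (norm c)\<^sup>2 * (norm (g x))\<^sup>2)"
    using assms unfolding L2_def by (intro set_integrable_mult_right) auto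
  then show "set_integrable lborel torus (\<lambda>x. (norm (c * g x))\<^sup>2)"
    by (simp add: norm_mult power_mult_distrib)
qed

lemma L2_zero: "L2 (\<lambda>x. 0)"
  by (rule L2_cont) simp

lemma L2_sum:
  assumes "finite I" "\<And>i. i \<in> I \<Longrightarrow> L2 (g i)"
  shows "L2 (\<lambda>x. \<Sum>i\<in>I. g i x)"
  using assms
proof (induction I rule: finite_induct)
  case empty then show ?case using L2_zero by simp
next
  case (insert i I)
  then show ?case by (simp add: L2_add)
qed

lemma L2_diff:
  assumes "L2 g" "L2 h"
  shows "L2 (\<lambda>x. g x - h x)"
  using L2_add[OF assms(1) L2_mult[OF assms(2), of "-1"]] by simp

lemma ip_sum_left:
  assumes "finite I" "\<And>i. i \<in> I \<Longrightarrow> L2 (g i)" "L2 h"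
  shows "ip (\<lambda>x. \<Sum>i\<in>I. a i * g i x) h = (\<Sum>i\<in>I. a i * ip (g i) h)"
proof -
  have eq: "(\<lambda>x. (\<Sum>i\<in>I. a i * g i x) * cnj (h x)) = (\<lambda>x. \<Sum>i\<in>I. a i * (g i x * cnj (h x)))"
    by (simp add: sum_distrib_right mult.assoc)
  have int: "set_integrable lborel torus (\<lambda>x. a i * (g i x * cnj (h x)))" if "i \<in> I" for i
    using L2_ip_int[OF assms(2)[OF that] assms(3)] by auto
  have "(LINT x:torus|lborel. (\<Sum>i\<in>I. a i * (g i x * cnj (h x))))
      = (\<Sum>i\<in>I. (LINT x:torus|lborel. a i * (g i x * cnj (h x))))"
    using int unfolding set_lebesgue_integral_def set_integrable_def
    by (simp add: scaleR_sum_right integral_sum)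
  then show ?thesis unfolding ip_def eq by simp
qed

lemma ip_sum_right:
  assumes "finite I" "\<And>i. i \<in> I \<Longrightarrow> L2 (h i)" "L2 g"
  shows "ip g (\<lambda>x. \<Sum>i\<in>I. a i * h i x) = (\<Sum>i\<in>I. cnj (a i) * ip g (h i))"
proof -
  have eq: "(\<lambda>x. g x * cnj (\<Sum>i\<in>I. a i * h i x)) = (\<lambda>x. \<Sum>i\<in>I. cnj (a i) * (g x * cnj (h i x)))"
    by (simp add: sum_distrib_left mult.assoc mult.left_commute)
  have int: "set_integrable lborel torus (\<lambda>x. cnj (a i) * (g x * cnj (h i x)))" if "i \<in> I" for i
    using L2_ip_int[OF assms(3) assms(2)[OF that]] by auto
  have "(LINT x:torus|lborel. (\<Sum>i\<in>I. cnj (a i) * (g x * cnj (h i x))))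
      = (\<Sum>i\<in>I. (LINT x:torus|lborel. cnj (a i) * (g x * cnj (h i x))))"
    using int unfolding set_lebesgue_integral_def set_integrable_def
    by (simp add: scaleR_sum_right integral_sum)
  then show ?thesis unfolding ip_def eq by simp
qed

lemma ip_diff_left:
  assumes "L2 g" "L2 g'" "L2 h"
  shows "ip (\<lambda>x. g x - g' x) h = ip g h - ip g' h"
proof -
  have "(\<lambda>x. (g x - g' x) * cnj (h x)) = (\<lambda>x. g x * cnj (h x) - g' x * cnj (h x))"
    by (simp add: algebra_simps)
  then show ?thesis unfolding ip_def
    using set_integral_diff(2)[OF L2_ip_int[OF assms(1,3)] L2_ip_int[OF assms(2,3)]] by simp
qed

lemma ip_diff_right:
  assumes "L2 g" "L2 h" "L2 h'"
  shows "ip g (\<lambda>x. h x - h' x) = ip g h - ip g h'"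
proof -
  have "(\<lambda>x. g x * cnj (h x - h' x)) = (\<lambda>x. g x * cnj (h x) - g x * cnj (h' x))"
    by (simp add: algebra_simps)
  then show ?thesis unfolding ip_def
    using set_integral_diff(2)[OF L2_ip_int[OF assms(1,2)] L2_ip_int[OF assms(1,3)]] by simp
qed

lemma ip_cnj: "ip h g = cnj (ip g h)"
proof -
  have "ip h g = integral\<^sup>L lborel (\<lambda>x. cnj (indicator torus x *\<^sub>R (g x * cnj (h x))))"
    unfolding ip_def set_lebesgue_integral_def
    by (intro Bochner_Integration.integral_cong) (auto simp: mult.commute)
  also have "\<dots> = cnj (ip g h)" unfolding ip_def set_lebesgue_integral_def
    by (rule Bochner_Integration.integral_cnj)
  finally show ?thesis .
qed

lemma ip_self: "ip g g = of_real (LINT x:torus|lborel. (norm (g x))\<^sup>2)"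
proof -
  have "(\<lambda>x. g x * cnj (g x)) = (\<lambda>x. complex_of_real ((norm (g x))\<^sup>2))"
    by (metis complex_norm_square of_real_power)
  then show ?thesis unfolding ip_def by (simp only: set_integral_complex_of_real)
qed

lemma ip_self_nonneg: "Re (ip g g) \<ge> 0"
  unfolding ip_self set_lebesgue_integral_def by (simp add: Bochner_Integration.integral_nonneg)

lemma bessel:
  assumes ons: "orthonormal_system f" and g: "L2 g"
  shows "(\<Sum>j<J. (norm (ip g (f j)))\<^sup>2) \<le> Re (ip g g)"
proof -
  have fL2: "L2 (f j)" for j using ons unfolding orthonormal_system_def L2_def by auto
  have orth: "ip (f j) (f k) = (if j = k then 1 else 0)" for j k
    using ons unfolding orthonormal_system_def ip_def by auto
  define p where "p j = ip g (f j)" for j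
  define h where "h x = (\<Sum>j<J. p j * f j x)" for x
  have hL2: "L2 h" unfolding h_def by (intro L2_sum L2_mult fL2) auto
  have gh: "ip g h = (\<Sum>j<J. cnj (p j) * p j)"
    unfolding h_def by (subst ip_sum_right) (auto simp: fL2 g p_def)
  have hg: "ip h g = (\<Sum>j<J. p j * cnj (p j))"
    by (subst ip_cnj) (simp add: gh mult.commute)
  have hh: "ip h h = (\<Sum>j<J. p j * cnj (p j))"
  proof -
    have e: "h = (\<lambda>x. \<Sum>j<J. p j * f j x)" by (simp add: h_def fun_eq_iff)
    have "ip h h = ip (\<lambda>x. \<Sum>j<J. p j * f j x) h" by (simp only: e[symmetric])
    also have "\<dots> = (\<Sum>j<J. p j * ip (f j) h)"
      by (rule ip_sum_left) (auto simp: fL2 hL2)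
    also have "\<dots> = (\<Sum>j<J. p j * ip (f j) (\<lambda>x. \<Sum>k<J. p k * f k x))" by (simp only: e[symmetric])
    also have "\<dots> = (\<Sum>j<J. p j * (\<Sum>k<J. cnj (p k) * ip (f j) (f k)))"
      by (intro sum.cong refl arg_cong2[where f="(*)"] ip_sum_right) (auto simp: fL2)
    also have "\<dots> = (\<Sum>j<J. p j * cnj (p j))"
      by (simp add: orth if_distrib cong: if_cong)
    finally show ?thesis .
  qed
  have "ip (\<lambda>x. g x - h x) (\<lambda>x. g x - h x) = ip g g - ip g h - (ip h g - ip h h)"
    by (simp add: ip_diff_left ip_diff_right g hL2 L2_diff)
  also have "\<dots> = ip g g - (\<Sum>j<J. p j * cnj (p j))"
    by (simp add: gh hg hh mult.commute)
  finally have "Re (ip g g) - (\<Sum>j<J. Re (p j * cnj (p j))) \<ge> 0"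
    using ip_self_nonneg[of "\<lambda>x. g x - h x"] by (simp add: Re_sum)
  moreover have "Re (p j * cnj (p j)) = (norm (p j))\<^sup>2" for j
    by (metis Re_complex_of_real complex_norm_square of_real_power)
  ultimately show ?thesis by (simp add: p_def)
qed


definition ee :: "int \<Rightarrow> real \<Rightarrow> complex" where "ee n x = exp (\<i> * of_real x * of_int n)"

lemma ee_L2: "L2 (ee n)" by (rule L2_cont) (auto simp: ee_def intro!: continuous_intros)

lemma fc_ip: "fourier_coeff f n = (1/(2* pi)) * ip f (ee n)"
proof -
  have "(\<lambda>x. exp (- \<i> * of_real x * of_int n) * f x) = (\<lambda>x. f x * cnj (ee n x))"
    by (simp add: ee_def exp_cnj mult.commute)
  then show ?thesis unfolding fourier_coeff_def ip_def by simp
qed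

lemma ip_ee: "ip (ee n) (ee m) = (if n = m then 2* pi else 0)"
proof -
  have eq: "(\<lambda>x. ee n x * cnj (ee m x)) = (\<lambda>x. exp (\<i> * of_real (x * of_int (n - m))))"
    by (simp add: ee_def exp_cnj exp_add[symmetric] algebra_simps)
  have si: "set_integrable lborel torus (\<lambda>x. exp (\<i> * of_real (x * of_int (n - m))))"
    using L2_ip_int[OF ee_L2 ee_L2, of n m] unfolding eq .
  have "ip (ee n) (ee m) = integral torus (\<lambda>x. exp (\<i> * of_real (x * of_int (n - m))))"
    unfolding ip_def eq by (rule set_borel_integral_eq_integral(2)[OF si])
  also have "\<dots> = integral {0..2* pi} (\<lambda>x. exp (\<i> * of_real (x * of_int (n - m))))"
  proof (rule integral_spike_set)
    show "negligible {x \<in> torus - {0..2 * pi}. exp (\<i> * complex_of_real (x * of_int (n - m))) \<noteq> 0}"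
      by (rule negligible_subset[of "{}"]) (auto simp: torus_def)
    show "negligible {x \<in> {0..2 * pi} - torus. exp (\<i> * complex_of_real (x * of_int (n - m))) \<noteq> 0}"
      by (rule negligible_subset[OF negligible_sing[of "2* pi"]]) (auto simp: torus_def)
  qed
  also have "\<dots> = II (of_int (n - m))" unfolding II_def by simp
  finally show ?thesis using II_int[of "n - m"] II_0 by auto
qed

definition gv :: "int set \<Rightarrow> (int \<Rightarrow> complex) \<Rightarrow> real \<Rightarrow> complex" where
  "gv S v x = (\<Sum>n\<in>S. v n * ee n x)"

lemma gv_L2: "finite S \<Longrightarrow> L2 (gv S v)"
  unfolding gv_def by (intro L2_sum L2_mult ee_L2)

lemma vbessel:
  assumes ons: "orthonormal_system f" and fin: "finite S"
  shows "(\<Sum>j<J. (norm (\<Sum>n\<in>S. fourier_coeff (f j) n * cnj (v n)))\<^sup>2)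
          \<le> (\<Sum>n\<in>S. (norm (v n))\<^sup>2) / (2* pi)"
proof -
  have fL2: "L2 (f j)" for j using ons unfolding orthonormal_system_def L2_def by auto
  have gve: "gv S v = (\<lambda>x. \<Sum>n\<in>S. v n * ee n x)" by (simp add: gv_def fun_eq_iff)
  have c1: "(\<Sum>n\<in>S. fourier_coeff (f j) n * cnj (v n)) = ip (f j) (gv S v) / (2* pi)" for j
  proof -
    have "ip (f j) (gv S v) = (\<Sum>n\<in>S. cnj (v n) * ip (f j) (ee n))"
      unfolding gve by (rule ip_sum_right) (auto simp: fin ee_L2 fL2)
    then show ?thesis by (simp add: fc_ip sum_divide_distrib mult.commute)
  qed
  have gg: "ip (gv S v) (gv S v) = of_real (2* pi * (\<Sum>n\<in>S. (norm (v n))\<^sup>2))"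
  proof -
    have "ip (gv S v) (gv S v) = (\<Sum>n\<in>S. v n * ip (ee n) (gv S v))"
      by (subst (1) gve, rule ip_sum_left) (auto simp: fin ee_L2 gv_L2)
    also have "\<dots> = (\<Sum>n\<in>S. v n * (\<Sum>m\<in>S. cnj (v m) * ip (ee n) (ee m)))"
      by (intro sum.cong refl arg_cong2[where f="(*)"], subst gve, rule ip_sum_right)
         (auto simp: fin ee_L2)
    also have "\<dots> = (\<Sum>n\<in>S. v n * (cnj (v n) * (2 * complex_of_real pi)))"
      using fin by (simp add: ip_ee if_distrib cong: if_cong)
    also have "\<dots> = (\<Sum>n\<in>S. of_real (2* pi*(norm (v n))\<^sup>2))"
      by (intro sum.cong refl, subst mult.assoc[symmetric], subst complex_norm_square[symmetric]) simp
    also have "\<dots> = of_real (2* pi * (\<Sum>n\<in>S. (norm (v n))\<^sup>2))"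
      by (simp only: of_real_sum sum_distrib_left)
    finally show ?thesis .
  qed
  have "(\<Sum>j<J. (norm (\<Sum>n\<in>S. fourier_coeff (f j) n * cnj (v n)))\<^sup>2)
      = (\<Sum>j<J. (norm (ip (gv S v) (f j)))\<^sup>2) / (4* pi^2)"
    by (simp add: c1 norm_divide power_divide sum_divide_distrib power2_eq_square ip_cnj[of "f _" "gv S v"])
  also have "\<dots> \<le> Re (ip (gv S v) (gv S v)) / (4* pi^2)"
    by (intro divide_right_mono bessel ons gv_L2 fin) simp
  also have "\<dots> = (\<Sum>n\<in>S. (norm (v n))\<^sup>2) / (2* pi)"
    unfolding gg by (simp add: power2_eq_square)
  finally show ?thesis .
qed


lemma regroup:
  fixes F :: "int \<Rightarrow> int \<Rightarrow> 'a::comm_monoid_add"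
  assumes "finite S" "finite K" "\<And>n m. n \<in> S \<Longrightarrow> m \<in> S \<Longrightarrow> n - m \<in> K"
  shows "(\<Sum>n\<in>S. \<Sum>m\<in>S. F n m) = (\<Sum>k\<in>K. \<Sum>n\<in>S. if n - k \<in> S then F n (n-k) else 0)"
proof -
  have "(\<Sum>m\<in>S. F n m) = (\<Sum>k\<in>K. if n - k \<in> S then F n (n-k) else 0)" if "n\<in>S" for n
  proof -
    have "(\<Sum>k\<in>K. if n - k \<in> S then F n (n-k) else 0) = (\<Sum>k\<in>{k\<in>K. n - k \<in> S}. F n (n-k))"
      using assms(2) by (simp add: sum.inter_filter)
    also have "\<dots> = (\<Sum>m\<in>S. F n m)"
      by (rule sum.reindex_bij_witness[where i="\<lambda>m. n - m" and j="\<lambda>k. n - k"]) (use assms(3) that in auto)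
    finally show ?thesis by simp
  qed
  then have "(\<Sum>n\<in>S. \<Sum>m\<in>S. F n m) = (\<Sum>n\<in>S. \<Sum>k\<in>K. if n - k \<in> S then F n (n-k) else 0)" by simp
  also have "\<dots> = (\<Sum>k\<in>K. \<Sum>n\<in>S. if n - k \<in> S then F n (n-k) else 0)" by (rule sum.swap)
  finally show ?thesis .
qed

lemma sqrt_step: "1 / real (Suc M) \<le> 2 * (sqrt (real (Suc M)) - sqrt (real M))"
proof -
  define a where "a = sqrt (real M)"
  define b where "b = sqrt (real (Suc M))"
  have a0: "0 \<le> a" unfolding a_def by simp
  have ab: "a \<le> b" unfolding a_def b_def by simp
  have b1: "1 \<le> b" unfolding b_def by simp
  have bb: "b^2 = real (Suc M)" unfolding b_def by simp
  have aa: "a^2 = real M" unfolding a_def by simp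
  have prod: "(b - a) * (b + a) = 1" using aa bb by (simp add: power2_eq_square algebra_simps)
  have "b * 1 \<le> b * b" using b1 by (intro mult_left_mono) auto
  then have "b + a \<le> 2 * b^2" using ab by (simp add: power2_eq_square)
  then have "1 \<le> (b - a) * (2 * b^2)" using prod ab
    by (metis diff_ge_0_iff_ge mult_left_mono)
  then have h: "1 \<le> (2 * (b - a)) * b^2" by (simp add: algebra_simps)
  have bp: "0 < b^2" using b1 by simp
  have "1 / b^2 \<le> 2 * (b - a)" using pos_divide_le_eq[OF bp, of 1 "2 * (b - a)"] h by simp
  then show ?thesis using bb unfolding a_def b_def by simp
qed

lemma hsum_nat: "(\<Sum>d=1..M. 1 / real d) \<le> 2 * sqrt (real M)"
proof (induction M)
  case 0 then show ?case by simp
next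
  case (Suc M)
  have "(\<Sum>d=1..Suc M. 1 / real d) = (\<Sum>d=1..M. 1 / real d) + 1 / real (Suc M)"
    by simp
  also have "\<dots> \<le> 2 * sqrt (real M) + 2 * (sqrt (real (Suc M)) - sqrt (real M))"
    using Suc sqrt_step[of M] by linarith
  finally show ?case by simp
qed

lemma hsum_half:
  assumes "finite A" "\<And>n'. n' \<in> A \<Longrightarrow> 1 \<le> h n' \<and> h n' \<le> int M" "inj_on h A"
  shows "(\<Sum>n'\<in>A. 1 / real_of_int (h n')) \<le> 2 * sqrt (real M)"
proof -
  have "(\<Sum>n'\<in>A. 1 / real_of_int (h n')) = (\<Sum>n'\<in>A. 1 / real (nat (h n')))"
  proof (intro sum.cong refl)
    fix x assume "x \<in> A"
    then have "0 \<le> h x" using assms(2) by force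
    then show "1 / real_of_int (h x) = 1 / real (nat (h x))" by (simp add: of_nat_nat)
  qed
  also have "\<dots> = (\<Sum>d\<in>(\<lambda>n'. nat (h n')) ` A. 1 / real d)"
  proof (subst sum.reindex)
    show "inj_on (\<lambda>n'. nat (h n')) A"
    proof (rule inj_onI)
      fix x y assume x: "x \<in> A" and y: "y \<in> A" and e: "nat (h x) = nat (h y)"
      from assms(2)[OF x] assms(2)[OF y] e have "h x = h y" by arith
      then show "x = y" using assms(3) x y by (simp add: inj_on_def)
    qed
  qed simp
  also have "\<dots> \<le> (\<Sum>d=1..M. 1 / real d)"
    by (rule sum_mono2) (use assms(2) in force)+
  also have "\<dots> \<le> 2 * sqrt (real M)" by (rule hsum_nat)
  finally show ?thesis .
qed

lemma hsum_int:
  assumes "finite T" "T \<subseteq> {n - int M .. n + int M}"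
  shows "(\<Sum>n'\<in>T-{n}. 1 / real_of_int \<bar>n - n'\<bar>) \<le> 4 * sqrt (real M)"
proof -
  let ?A = "{n'\<in>T. n' < n}" and ?B = "{n'\<in>T. n < n'}"
  have split: "T - {n} = ?A \<union> ?B" by auto
  have "(\<Sum>n'\<in>T-{n}. 1 / real_of_int \<bar>n - n'\<bar>)
      = (\<Sum>n'\<in>?A. 1 / real_of_int \<bar>n - n'\<bar>) + (\<Sum>n'\<in>?B. 1 / real_of_int \<bar>n - n'\<bar>)"
    unfolding split by (rule sum.union_disjoint) (use assms(1) in auto)
  also have "(\<Sum>n'\<in>?A. 1 / real_of_int \<bar>n - n'\<bar>) = (\<Sum>n'\<in>?A. 1 / real_of_int (n - n'))"
    by (intro sum.cong refl) auto
  also have "\<dots> \<le> 2 * sqrt (real M)"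
    by (rule hsum_half) (use assms in \<open>auto simp: inj_on_def\<close>)
  also have "(\<Sum>n'\<in>?B. 1 / real_of_int \<bar>n - n'\<bar>) = (\<Sum>n'\<in>?B. 1 / real_of_int (n' - n))"
    by (intro sum.cong refl) auto
  also have "\<dots> \<le> 2 * sqrt (real M)"
    by (rule hsum_half) (use assms in \<open>auto simp: inj_on_def\<close>)
  finally show ?thesis by simp
qed

lemma II_neg: "II (-g) = cnj (II g)"
proof -
  have "cnj (II g) = integral {0..2* pi} (\<lambda>t. cnj (exp (\<i> * of_real (t* g))))"
    unfolding II_def by (rule integral_cnj)
  also have "\<dots> = II (-g)" unfolding II_def by (simp add: exp_cnj)
  finally show ?thesis by simp
qed

lemma II_norm_sym: "norm (II (x - y)) = norm (II (y - x))"
  using II_neg[of "y - x"] by simp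

lemma osc:
  fixes a :: "int \<Rightarrow> real" and b :: "int \<Rightarrow> complex"
  assumes fin: "finite S" and W: "\<And>n. n \<in> S \<Longrightarrow> (\<Sum>n'\<in>S. norm (II (a n - a n'))) \<le> W"
  shows "integral {0..2* pi} (\<lambda>t. (norm (\<Sum>n\<in>S. b n * exp (\<i> * of_real (t * a n))))\<^sup>2)
          \<le> W * (\<Sum>n\<in>S. (norm (b n))\<^sup>2)"
proof -
  let ?F = "\<lambda>t. \<Sum>n\<in>S. \<Sum>n'\<in>S. b n * cnj (b n') * exp (\<i> * of_real (t * (a n - a n')))"
  let ?I = "\<Sum>n\<in>S. \<Sum>n'\<in>S. b n * cnj (b n') * II (a n - a n')"
  have h1: "(?F has_integral ?I) {0..2* pi}"
    by (intro has_integral_sum fin has_integral_mult_right II_has)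
  have eq: "(norm (\<Sum>n\<in>S. b n * exp (\<i> * of_real (t * a n))))\<^sup>2 = Re (?F t)" for t
  proof -
    have "complex_of_real ((norm (\<Sum>n\<in>S. b n * exp (\<i> * of_real (t * a n))))\<^sup>2)
        = (\<Sum>n\<in>S. b n * exp (\<i> * of_real (t * a n))) * cnj (\<Sum>n\<in>S. b n * exp (\<i> * of_real (t * a n)))"
      by (rule complex_norm_square)
    also have "\<dots> = ?F t"
      by (simp add: sum_product cnj_sum exp_cnj mult_ac flip: exp_add) (simp add: algebra_simps)
    finally show ?thesis by (metis Re_complex_of_real)
  qed
  have h2: "((\<lambda>t. (norm (\<Sum>n\<in>S. b n * exp (\<i> * of_real (t * a n))))\<^sup>2) has_integral Re ?I) {0..2* pi}"
    using has_integral_linear[OF h1 bounded_linear_Re] unfolding eq by (simp add: o_def)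
  let ?K = "\<lambda>n n'. norm (II (a n - a n'))"
  have "Re ?I \<le> norm ?I" by (rule complex_Re_le_cmod)
  also have "\<dots> \<le> (\<Sum>n\<in>S. \<Sum>n'\<in>S. norm (b n) * norm (b n') * ?K n n')"
    by (rule order_trans[OF norm_sum sum_mono], rule order_trans[OF norm_sum sum_mono])
       (simp add: norm_mult)
  also have "\<dots> \<le> (\<Sum>n\<in>S. \<Sum>n'\<in>S. ((norm (b n))\<^sup>2 * ?K n n' + (norm (b n'))\<^sup>2 * ?K n n') / 2)"
  proof (intro sum_mono)
    fix n n'
    have "norm (b n) * norm (b n') \<le> ((norm (b n))\<^sup>2 + (norm (b n'))\<^sup>2) / 2"
    proof -
      have "0 \<le> (norm (b n) - norm (b n'))\<^sup>2" by simp
      then show ?thesis by (simp add: power2_eq_square algebra_simps)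
    qed
    from mult_right_mono[OF this, of "?K n n'"]
    show "norm (b n) * norm (b n') * ?K n n' \<le> ((norm (b n))\<^sup>2 * ?K n n' + (norm (b n'))\<^sup>2 * ?K n n') / 2"
      by (simp add: algebra_simps add_divide_distrib)
  qed
  also have "\<dots> = ((\<Sum>n\<in>S. \<Sum>n'\<in>S. (norm (b n))\<^sup>2 * ?K n n') + (\<Sum>n\<in>S. \<Sum>n'\<in>S. (norm (b n'))\<^sup>2 * ?K n n')) / 2"
    by (simp only: add_divide_distrib sum.distrib sum_divide_distrib)
  also have "\<dots> = ((\<Sum>n\<in>S. (norm (b n))\<^sup>2 * (\<Sum>n'\<in>S. ?K n n')) + (\<Sum>n'\<in>S. (norm (b n'))\<^sup>2 * (\<Sum>n\<in>S. ?K n n'))) / 2"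
  proof -
    have e1: "(\<Sum>n\<in>S. \<Sum>n'\<in>S. (norm (b n))\<^sup>2 * ?K n n') = (\<Sum>n\<in>S. (norm (b n))\<^sup>2 * (\<Sum>n'\<in>S. ?K n n'))"
      by (simp only: sum_distrib_left)
    have e2: "(\<Sum>n\<in>S. \<Sum>n'\<in>S. (norm (b n'))\<^sup>2 * ?K n n') = (\<Sum>n'\<in>S. (norm (b n'))\<^sup>2 * (\<Sum>n\<in>S. ?K n n'))"
      by (subst sum.swap) (simp only: sum_distrib_left)
    show ?thesis by (simp only: e1 e2)
  qed
  also have "\<dots> \<le> ((\<Sum>n\<in>S. (norm (b n))\<^sup>2 * W) + (\<Sum>n'\<in>S. (norm (b n'))\<^sup>2 * W)) / 2"
  proof -
    have "(\<Sum>n\<in>S. ?K n n') \<le> W" if "n' \<in> S" for n'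
    proof -
      have "(\<Sum>n\<in>S. ?K n n') = (\<Sum>n\<in>S. ?K n' n)" by (intro sum.cong refl II_norm_sym)
      then show ?thesis using W[OF that] by simp
    qed
    then show ?thesis
      by (intro divide_right_mono add_mono sum_mono mult_left_mono W) auto
  qed
  also have "\<dots> = W * (\<Sum>n\<in>S. (norm (b n))\<^sup>2)"
    by (simp add: sum_distrib_left mult.commute)
  finally show ?thesis using integral_unique[OF h2] by simp
qed


lemma lp_facts:
  assumes b: "0 < \<beta>" "\<beta> \<le> 2" and lp: "in_lp \<beta> lam"
  shows "\<bar>lam j\<bar> \<le> lp_norm \<beta> lam" "summable (\<lambda>j. (lam j)\<^sup>2)" "(\<Sum>j. (lam j)\<^sup>2) \<le> (lp_norm \<beta> lam)\<^sup>2"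
proof -
  define s where "s = (\<Sum>j. \<bar>lam j\<bar> powr \<beta>)"
  have sm: "summable (\<lambda>j. \<bar>lam j\<bar> powr \<beta>)" using lp unfolding in_lp_def .
  have s0: "0 \<le> s" unfolding s_def by (rule suminf_nonneg[OF sm]) simp
  have trm: "\<bar>lam i\<bar> powr \<beta> \<le> s" for i
    using sum_le_suminf[OF sm, of "{i}"] unfolding s_def by simp
  define L where "L = s powr (1/\<beta>)"
  have L0: "0 \<le> L" unfolding L_def by simp
  have lj: "\<bar>lam i\<bar> \<le> L" for i
  proof -
    have "(\<bar>lam i\<bar> powr \<beta>) powr (1/\<beta>) \<le> s powr (1/\<beta>)" by (rule powr_mono2) (use b trm in auto)
    then show ?thesis using b unfolding L_def by (simp add: powr_powr)
  qed
  then show "\<bar>lam j\<bar> \<le> lp_norm \<beta> lam" unfolding lp_norm_def L_def s_def .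
  have bnd: "(lam i)\<^sup>2 \<le> \<bar>lam i\<bar> powr \<beta> * L powr (2 - \<beta>)" for i
  proof (cases "lam i = 0")
    case True then show ?thesis by simp
  next
    case False
    then have pos: "0 < \<bar>lam i\<bar>" by simp
    have "(lam i)\<^sup>2 = \<bar>lam i\<bar> powr 2"
      using pos by (simp add: powr_numeral)
    also have "\<dots> = \<bar>lam i\<bar> powr \<beta> * \<bar>lam i\<bar> powr (2 - \<beta>)"
      by (simp add: powr_add[symmetric])
    also have "\<dots> \<le> \<bar>lam i\<bar> powr \<beta> * L powr (2 - \<beta>)"
      by (intro mult_left_mono powr_mono2) (use b lj in auto)
    finally show ?thesis .
  qed
  have sm2: "summable (\<lambda>i. \<bar>lam i\<bar> powr \<beta> * L powr (2 - \<beta>))"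
    by (rule summable_mult2[OF sm])
  show "summable (\<lambda>j. (lam j)\<^sup>2)"
    by (rule summable_comparison_test[OF _ sm2]) (use bnd in auto)
  then have "(\<Sum>j. (lam j)\<^sup>2) \<le> (\<Sum>i. \<bar>lam i\<bar> powr \<beta> * L powr (2 - \<beta>))"
    by (intro suminf_le bnd sm2)
  also have "\<dots> = s * L powr (2 - \<beta>)"
    unfolding s_def by (rule suminf_mult2[symmetric, OF sm])
  also have "\<dots> = L\<^sup>2"
  proof (cases "s = 0")
    case True then show ?thesis unfolding L_def by simp
  next
    case False
    then have sp: "0 < s" using s0 by simp
    have "s * L powr (2 - \<beta>) = s powr 1 * s powr ((2 - \<beta>)/\<beta>)"
      using sp unfolding L_def by (simp add: powr_powr)
    also have "\<dots> = s powr (2/\<beta>)"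
    proof -
      have e: "1 + (2 - \<beta>)/\<beta> = 2/\<beta>" using b by (simp add: field_simps)
      show ?thesis by (simp only: powr_add[symmetric] e)
    qed
    also have "\<dots> = L\<^sup>2"
      unfolding L_def power2_eq_square by (simp add: powr_add[symmetric])
    finally show ?thesis .
  qed
  finally show "(\<Sum>j. (lam j)\<^sup>2) \<le> (lp_norm \<beta> lam)\<^sup>2" unfolding lp_norm_def L_def s_def .
qed


lemma swap3:
  "(\<Sum>b\<in>B. \<Sum>c\<in>C. \<Sum>d\<in>D. g b c d) = (\<Sum>c\<in>C. \<Sum>d\<in>D. \<Sum>b\<in>B. g b c d)"
proof -
  have "(\<Sum>b\<in>B. \<Sum>c\<in>C. \<Sum>d\<in>D. g b c d) = (\<Sum>c\<in>C. \<Sum>b\<in>B. \<Sum>d\<in>D. g b c d)"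
    by (rule sum.swap)
  also have "\<dots> = (\<Sum>c\<in>C. \<Sum>d\<in>D. \<Sum>b\<in>B. g b c d)"
    by (intro sum.cong refl sum.swap)
  finally show ?thesis .
qed

lemma swap4:
  "(\<Sum>a\<in>A. \<Sum>b\<in>B. \<Sum>c\<in>C. \<Sum>d\<in>D. f a b c d) = (\<Sum>c\<in>C. \<Sum>d\<in>D. \<Sum>a\<in>A. \<Sum>b\<in>B. f a b c d)"
proof -
  have "(\<Sum>a\<in>A. \<Sum>b\<in>B. \<Sum>c\<in>C. \<Sum>d\<in>D. f a b c d) = (\<Sum>a\<in>A. \<Sum>c\<in>C. \<Sum>d\<in>D. \<Sum>b\<in>B. f a b c d)"
    by (intro sum.cong refl swap3)
  also have "\<dots> = (\<Sum>c\<in>C. \<Sum>d\<in>D. \<Sum>a\<in>A. \<Sum>b\<in>B. f a b c d)"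
    by (rule swap3)
  finally show ?thesis .
qed

lemma frob_alg:
  fixes c :: "nat \<Rightarrow> int \<Rightarrow> complex" and lam :: "nat \<Rightarrow> real"
  assumes "finite S"
  shows "(\<Sum>n\<in>S. \<Sum>m\<in>S. (\<Sum>j<J. of_real (lam j) * (c j n * cnj (c j m))) * cnj (\<Sum>j<J. of_real (lam j) * (c j n * cnj (c j m))))
       = (\<Sum>j<J. \<Sum>j'<J. of_real (lam j * lam j') * ((\<Sum>n\<in>S. c j n * cnj (c j' n)) * cnj (\<Sum>n\<in>S. c j n * cnj (c j' n))))"
proof -
  have "(\<Sum>n\<in>S. \<Sum>m\<in>S. (\<Sum>j<J. of_real (lam j) * (c j n * cnj (c j m))) * cnj (\<Sum>j<J. of_real (lam j) * (c j n * cnj (c j m))))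
      = (\<Sum>n\<in>S. \<Sum>m\<in>S. \<Sum>j<J. \<Sum>j'<J. of_real (lam j * lam j') * ((c j n * cnj (c j' n)) * (cnj (c j m) * c j' m)))"
    by (simp add: cnj_sum sum_product mult_ac)
  also have "\<dots> = (\<Sum>j<J. \<Sum>j'<J. \<Sum>n\<in>S. \<Sum>m\<in>S. of_real (lam j * lam j') * ((c j n * cnj (c j' n)) * (cnj (c j m) * c j' m)))"
    by (rule swap4)
  also have "\<dots> = (\<Sum>j<J. \<Sum>j'<J. of_real (lam j * lam j') * ((\<Sum>n\<in>S. c j n * cnj (c j' n)) * cnj (\<Sum>n\<in>S. c j n * cnj (c j' n))))"
  proof (intro sum.cong refl)
    fix j j'
    have "cnj (\<Sum>n\<in>S. c j n * cnj (c j' n)) = (\<Sum>m\<in>S. cnj (c j m) * c j' m)" by (simp add: cnj_sum)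
    then show "(\<Sum>n\<in>S. \<Sum>m\<in>S. of_real (lam j * lam j') * ((c j n * cnj (c j' n)) * (cnj (c j m) * c j' m)))
      = of_real (lam j * lam j') * ((\<Sum>n\<in>S. c j n * cnj (c j' n)) * cnj (\<Sum>n\<in>S. c j n * cnj (c j' n)))"
      by (simp add: sum_product sum_distrib_left mult_ac)
  qed
  finally show ?thesis .
qed

lemma reN: "Re (z * cnj z) = (norm z)\<^sup>2"
  by (metis Re_complex_of_real complex_norm_square)

lemma reN2: "Re (of_real r * (z * cnj z)) = r * (norm z)\<^sup>2"
  by (metis Re_complex_of_real complex_norm_square of_real_mult)

lemma frob_bound:
  fixes c :: "nat \<Rightarrow> int \<Rightarrow> complex" and lam :: "nat \<Rightarrow> real"
  assumes fin: "finite S"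
    and HB: "\<And>J v. (\<Sum>j<J. (norm (\<Sum>n\<in>S. c j n * cnj (v n)))\<^sup>2) \<le> (\<Sum>n\<in>S. (norm (v n))\<^sup>2) / (2*pi)"
  shows "(\<Sum>n\<in>S. \<Sum>m\<in>S. (norm (\<Sum>j<J. of_real (lam j) * (c j n * cnj (c j m))))\<^sup>2) \<le> (\<Sum>j<J. (lam j)\<^sup>2) / (4*pi\<^sup>2)"
proof -
  define G where "G j j' = (\<Sum>n\<in>S. c j n * cnj (c j' n))" for j j'
  define cS where "cS j = (\<Sum>n\<in>S. (norm (c j n))\<^sup>2)" for j
  have Gself: "G j j = of_real (cS j)" for j
    unfolding G_def cS_def by (simp only: of_real_sum complex_norm_square)
  have Gsym: "norm (G j' j) = norm (G j j')" for j j'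
  proof -
    have "G j' j = cnj (G j j')" unfolding G_def by (simp add: cnj_sum mult.commute)
    then show ?thesis by simp
  qed
  have cS0: "0 \<le> cS j" for j unfolding cS_def by (simp add: sum_nonneg)
  have a: "cS j \<le> 1/(2*pi)" for j
  proof -
    have "(norm (G j j))\<^sup>2 \<le> (\<Sum>j'<Suc j. (norm (G j' j))\<^sup>2)"
      by (rule member_le_sum) auto
    also have "\<dots> \<le> cS j / (2*pi)" using HB[where J="Suc j" and v="c j"] unfolding G_def cS_def .
    finally have "(cS j)\<^sup>2 \<le> cS j / (2*pi)" unfolding Gself using cS0[of j] by simp
    then have "cS j * cS j \<le> cS j * (1/(2*pi))" by (simp add: power2_eq_square)
    show ?thesis
    proof (cases "cS j = 0")
      case True then show ?thesis by simp
    next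
      case False
      then have "0 < cS j" using cS0[of j] by simp
      from mult_left_le_imp_le[OF \<open>cS j * cS j \<le> cS j * (1/(2*pi))\<close> this] show ?thesis .
    qed
  qed
  have b: "(\<Sum>j'<J. (norm (G j j'))\<^sup>2) \<le> 1/(4*pi\<^sup>2)" for j
  proof -
    have "(\<Sum>j'<J. (norm (G j j'))\<^sup>2) = (\<Sum>j'<J. (norm (G j' j))\<^sup>2)" by (simp add: Gsym)
    also have "\<dots> \<le> cS j / (2*pi)" using HB[where J=J and v="c j"] unfolding G_def cS_def .
    also have "\<dots> \<le> (1/(2*pi)) / (2*pi)" by (intro divide_right_mono a) simp
    also have "\<dots> = 1/(4*pi\<^sup>2)" by (simp add: power2_eq_square)
    finally show ?thesis .
  qed
  have e1: "(\<Sum>j<J. \<Sum>j'<J. (lam j)\<^sup>2 * (norm (G j j'))\<^sup>2) = (\<Sum>j<J. (lam j)\<^sup>2 * (\<Sum>j'<J. (norm (G j j'))\<^sup>2))"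
    by (simp only: sum_distrib_left)
  have e2: "(\<Sum>j<J. \<Sum>j'<J. (lam j')\<^sup>2 * (norm (G j j'))\<^sup>2) = (\<Sum>j'<J. (lam j')\<^sup>2 * (\<Sum>j<J. (norm (G j j'))\<^sup>2))"
    by (subst sum.swap) (simp only: sum_distrib_left)
  have "(\<Sum>n\<in>S. \<Sum>m\<in>S. (norm (\<Sum>j<J. of_real (lam j) * (c j n * cnj (c j m))))\<^sup>2)
      = Re (\<Sum>n\<in>S. \<Sum>m\<in>S. (\<Sum>j<J. of_real (lam j) * (c j n * cnj (c j m))) * cnj (\<Sum>j<J. of_real (lam j) * (c j n * cnj (c j m))))"
    by (simp only: Re_sum reN)
  also have "\<dots> = Re (\<Sum>j<J. \<Sum>j'<J. of_real (lam j * lam j') * (G j j' * cnj (G j j')))"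
    unfolding G_def by (subst frob_alg[OF fin]) (rule refl)
  also have "\<dots> = (\<Sum>j<J. \<Sum>j'<J. lam j * lam j' * (norm (G j j'))\<^sup>2)"
    by (simp only: Re_sum reN2 mult.assoc)
  also have "\<dots> \<le> (\<Sum>j<J. \<Sum>j'<J. ((lam j)\<^sup>2 * (norm (G j j'))\<^sup>2 + (lam j')\<^sup>2 * (norm (G j j'))\<^sup>2) / 2)"
  proof (intro sum_mono)
    fix j j'
    have "lam j * lam j' \<le> ((lam j)\<^sup>2 + (lam j')\<^sup>2) / 2"
    proof -
      have "0 \<le> (lam j - lam j')\<^sup>2" by simp
      then show ?thesis by (simp add: power2_eq_square algebra_simps)
    qed
    from mult_right_mono[OF this, of "(norm (G j j'))\<^sup>2"]
    show "lam j * lam j' * (norm (G j j'))\<^sup>2 \<le> ((lam j)\<^sup>2 * (norm (G j j'))\<^sup>2 + (lam j')\<^sup>2 * (norm (G j j'))\<^sup>2) / 2"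
      by (simp add: algebra_simps add_divide_distrib)
  qed
  also have "\<dots> = ((\<Sum>j<J. \<Sum>j'<J. (lam j)\<^sup>2 * (norm (G j j'))\<^sup>2) + (\<Sum>j<J. \<Sum>j'<J. (lam j')\<^sup>2 * (norm (G j j'))\<^sup>2)) / 2"
    by (simp only: add_divide_distrib sum.distrib sum_divide_distrib)
  also have "\<dots> = ((\<Sum>j<J. (lam j)\<^sup>2 * (\<Sum>j'<J. (norm (G j j'))\<^sup>2)) + (\<Sum>j'<J. (lam j')\<^sup>2 * (\<Sum>j<J. (norm (G j j'))\<^sup>2))) / 2"
    by (simp only: e1 e2)
  also have "\<dots> \<le> ((\<Sum>j<J. (lam j)\<^sup>2 * (1/(4*pi\<^sup>2))) + (\<Sum>j'<J. (lam j')\<^sup>2 * (1/(4*pi\<^sup>2)))) / 2"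
  proof -
    have b': "(\<Sum>j<J. (norm (G j j'))\<^sup>2) \<le> 1/(4*pi\<^sup>2)" for j'
      using b[of j'] by (simp add: Gsym)
    show ?thesis by (intro divide_right_mono add_mono sum_mono mult_left_mono b b') auto
  qed
  also have "\<dots> = (\<Sum>j<J. (lam j)\<^sup>2) / (4*pi\<^sup>2)"
    by (simp add: sum_divide_distrib)
  finally show ?thesis .
qed


lemma coef_sq_bound:
  assumes ons: "orthonormal_system f"
  shows "(\<Sum>j<J. (norm (fourier_coeff (f j) n))\<^sup>2) \<le> 1/(2*pi)"
  using vbessel[OF ons, where S="{n}" and J=J and v="\<lambda>_. 1"] by simp

lemma coef_sq_summable:
  assumes ons: "orthonormal_system f"
  shows "summable (\<lambda>j. (norm (fourier_coeff (f j) n))\<^sup>2)"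
  by (rule summableI_nonneg_bounded[where x="1/(2*pi)"]) (use coef_sq_bound[OF ons] in auto)

lemma coef_summable:
  assumes ons: "orthonormal_system f" and M: "\<And>j. \<bar>lam j\<bar> \<le> M"
  shows "summable (\<lambda>j. of_real (lam j) * (fourier_coeff (f j) n * cnj (fourier_coeff (f j) m)))"
proof (rule summable_comparison_test'[where N=0])
  have M0: "0 \<le> M" using M[of 0] by linarith
  show "summable (\<lambda>j. M * ((norm (fourier_coeff (f j) n))\<^sup>2 + (norm (fourier_coeff (f j) m))\<^sup>2))"
    by (intro summable_mult summable_add coef_sq_summable ons)
  fix j :: nat
  have "norm (of_real (lam j) * (fourier_coeff (f j) n * cnj (fourier_coeff (f j) m)))
      = \<bar>lam j\<bar> * (norm (fourier_coeff (f j) n) * norm (fourier_coeff (f j) m))"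
    by (simp add: norm_mult)
  also have "\<dots> \<le> M * ((norm (fourier_coeff (f j) n))\<^sup>2 + (norm (fourier_coeff (f j) m))\<^sup>2)"
    by (intro mult_mono M ab_le) (auto simp: M0)
  finally show "norm (of_real (lam j) * (fourier_coeff (f j) n * cnj (fourier_coeff (f j) m)))
      \<le> M * ((norm (fourier_coeff (f j) n))\<^sup>2 + (norm (fourier_coeff (f j) m))\<^sup>2)" .
qed

definition AA :: "(nat \<Rightarrow> real) \<Rightarrow> (nat \<Rightarrow> real \<Rightarrow> complex) \<Rightarrow> int \<Rightarrow> int \<Rightarrow> complex" where
  "AA lam f n m = (\<Sum>j. of_real (lam j) * (fourier_coeff (f j) n * cnj (fourier_coeff (f j) m)))"

definition EE :: "real \<Rightarrow> real \<Rightarrow> int \<Rightarrow> complex" where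
  "EE t x n = exp (\<i> * of_real (x * of_int n + t * sqrt (of_int n ^ 2 + of_int n ^ 4)))"

definition kap :: complex where "kap = (1 / (2 * pi)) * cnj (1 / (2 * pi))"

definition VV :: "nat \<Rightarrow> (nat \<Rightarrow> real) \<Rightarrow> (nat \<Rightarrow> real \<Rightarrow> complex) \<Rightarrow> real \<Rightarrow> real \<Rightarrow> complex" where
  "VV N lam f t x = kap * (\<Sum>n\<in>S_set N. \<Sum>m\<in>S_set N. AA lam f n m * (EE t x n * cnj (EE t x m)))"

lemma rho_eq:
  assumes ons: "orthonormal_system f" and M: "\<And>j. \<bar>lam j\<bar> \<le> M"
  shows "(\<Sum>j. lam j * (norm (D_op N (f j) t x))\<^sup>2) = Re (VV N lam f t x)"
proof -
  let ?c = "\<lambda>j n. fourier_coeff (f j) n"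
  have trm: "complex_of_real (lam j * (norm (D_op N (f j) t x))\<^sup>2)
     = kap * (\<Sum>n\<in>S_set N. \<Sum>m\<in>S_set N. (of_real (lam j) * (?c j n * cnj (?c j m))) * (EE t x n * cnj (EE t x m)))" for j
  proof -
    have D: "D_op N (f j) t x = (1 / (2 * pi)) * (\<Sum>n\<in>S_set N. ?c j n * EE t x n)"
      unfolding D_op_def EE_def by simp
    have "complex_of_real ((norm (D_op N (f j) t x))\<^sup>2) = D_op N (f j) t x * cnj (D_op N (f j) t x)"
      by (rule complex_norm_square)
    also have "\<dots> = kap * (\<Sum>n\<in>S_set N. \<Sum>m\<in>S_set N. (?c j n * cnj (?c j m)) * (EE t x n * cnj (EE t x m)))"
      unfolding D kap_def by (simp add: cnj_sum sum_product mult_ac)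
    finally show ?thesis
      by (simp add: sum_distrib_left mult_ac)
  qed
  have sm: "(\<lambda>j. kap * (\<Sum>n\<in>S_set N. \<Sum>m\<in>S_set N. (of_real (lam j) * (?c j n * cnj (?c j m))) * (EE t x n * cnj (EE t x m))))
       sums VV N lam f t x"
    unfolding VV_def AA_def
    by (intro sums_mult sums_sum sums_mult2 summable_sums coef_summable[OF ons M])
  then have "(\<lambda>j. complex_of_real (lam j * (norm (D_op N (f j) t x))\<^sup>2)) sums VV N lam f t x"
    unfolding trm .
  then have "(\<lambda>j. lam j * (norm (D_op N (f j) t x))\<^sup>2) sums Re (VV N lam f t x)"
    using sums_complex_iff by fastforce
  then show ?thesis by (rule sums_unique[symmetric])
qed

definition bb :: "nat \<Rightarrow> (nat \<Rightarrow> real) \<Rightarrow> (nat \<Rightarrow> real \<Rightarrow> complex) \<Rightarrow> int \<Rightarrow> int \<Rightarrow> complex" where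
  "bb N lam f k n = (if n - k \<in> S_set N then AA lam f n (n - k) else 0)"

definition CC :: "nat \<Rightarrow> (nat \<Rightarrow> real) \<Rightarrow> (nat \<Rightarrow> real \<Rightarrow> complex) \<Rightarrow> int \<Rightarrow> real \<Rightarrow> complex" where
  "CC N lam f k t = (\<Sum>n\<in>S_set N. bb N lam f k n * exp (\<i> * of_real (t * alpha k n)))"

definition KK :: "nat \<Rightarrow> int set" where "KK N = {- 2 * int N .. 2 * int N}"

lemma EE_prod: "EE t x n * cnj (EE t x m) = exp (\<i> * of_real (x * of_int (n - m) + t * (om n - om m)))"
proof -
  have "EE t x n * cnj (EE t x m) = exp (\<i> * of_real (x * of_int n + t * om n) + (- (\<i> * of_real (x * of_int m + t * om m))))"
    unfolding EE_def om_def by (simp add: exp_cnj exp_add[symmetric])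
  also have "\<i> * of_real (x * of_int n + t * om n) + (- (\<i> * of_real (x * of_int m + t * om m)))
      = \<i> * of_real (x * of_int (n - m) + t * (om n - om m))"
    by (simp add: algebra_simps)
  finally show ?thesis .
qed

lemma kap_norm: "norm kap = 1 / (4 * pi\<^sup>2)"
  unfolding kap_def by (simp add: norm_mult norm_divide power2_eq_square)

lemma V_regroup:
  "VV N lam f t x = kap * (\<Sum>k\<in>KK N. exp (\<i> * of_real (x * of_int k)) * CC N lam f k t)"
proof -
  have fin: "finite (S_set N)" unfolding S_set_def by simp
  have "(\<Sum>n\<in>S_set N. \<Sum>m\<in>S_set N. AA lam f n m * (EE t x n * cnj (EE t x m)))
     = (\<Sum>k\<in>KK N. \<Sum>n\<in>S_set N. if n - k \<in> S_set N then AA lam f n (n - k) * (EE t x n * cnj (EE t x (n - k))) else 0)"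
    by (rule regroup) (auto simp: fin KK_def S_set_def)
  also have "\<dots> = (\<Sum>k\<in>KK N. exp (\<i> * of_real (x * of_int k)) * CC N lam f k t)"
  proof (intro sum.cong refl)
    fix k
    show "(\<Sum>n\<in>S_set N. if n - k \<in> S_set N then AA lam f n (n - k) * (EE t x n * cnj (EE t x (n - k))) else 0)
        = exp (\<i> * of_real (x * of_int k)) * CC N lam f k t"
      unfolding CC_def sum_distrib_left
    proof (intro sum.cong refl)
      fix n
      have "EE t x n * cnj (EE t x (n - k)) = exp (\<i> * of_real (x * of_int k)) * exp (\<i> * of_real (t * alpha k n))"
        unfolding EE_prod alpha_def by (simp add: exp_add[symmetric] algebra_simps)
      then show "(if n - k \<in> S_set N then AA lam f n (n - k) * (EE t x n * cnj (EE t x (n - k))) else 0)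
          = exp (\<i> * of_real (x * of_int k)) * (bb N lam f k n * exp (\<i> * of_real (t * alpha k n)))"
        unfolding bb_def by (simp add: mult_ac)
    qed
  qed
  finally show ?thesis unfolding VV_def by simp
qed

lemma V_bound:
  "norm (VV N lam f t x) \<le> (1 / (4 * pi\<^sup>2)) * (\<Sum>k\<in>KK N. norm (CC N lam f k t))"
proof -
  have "norm (VV N lam f t x) = norm kap * norm (\<Sum>k\<in>KK N. exp (\<i> * of_real (x * of_int k)) * CC N lam f k t)"
    unfolding V_regroup by (simp add: norm_mult)
  also have "\<dots> \<le> norm kap * (\<Sum>k\<in>KK N. norm (CC N lam f k t))"
  proof (intro mult_left_mono)
    have "norm (\<Sum>k\<in>KK N. exp (\<i> * of_real (x * of_int k)) * CC N lam f k t)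
        \<le> (\<Sum>k\<in>KK N. norm (exp (\<i> * of_real (x * of_int k)) * CC N lam f k t))"
      by (rule norm_sum)
    also have "\<dots> = (\<Sum>k\<in>KK N. norm (CC N lam f k t))"
      by (simp add: norm_mult)
    finally show "norm (\<Sum>k\<in>KK N. exp (\<i> * of_real (x * of_int k)) * CC N lam f k t) \<le> (\<Sum>k\<in>KK N. norm (CC N lam f k t))" .
  qed simp
  finally show ?thesis by (simp add: kap_norm)
qed

lemma VV_cont: "continuous_on UNIV (\<lambda>x. VV N lam f t x)"
  unfolding VV_def EE_def by (intro continuous_intros)

lemma esssup_bound:
  assumes ons: "orthonormal_system f" and M: "\<And>j. \<bar>lam j\<bar> \<le> M"
  shows "esssup (restrict_space lborel torus) (\<lambda>x. ennreal \<bar>\<Sum>j. lam j * (norm (D_op N (f j) t x))\<^sup>2\<bar>)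
     \<le> ennreal ((1 / (4 * pi\<^sup>2)) * (\<Sum>k\<in>KK N. norm (CC N lam f k t)))"
proof -
  have eq: "(\<lambda>x. ennreal \<bar>\<Sum>j. lam j * (norm (D_op N (f j) t x))\<^sup>2\<bar>) = (\<lambda>x. ennreal \<bar>Re (VV N lam f t x)\<bar>)"
    using rho_eq[OF ons M] by simp
  have [measurable]: "(\<lambda>x. VV N lam f t x) \<in> borel_measurable borel"
    by (rule borel_measurable_continuous_onI[OF VV_cont])
  have meas: "(\<lambda>x. ennreal \<bar>Re (VV N lam f t x)\<bar>) \<in> borel_measurable (restrict_space lborel torus)"
    by (rule measurable_restrict_space1) simp
  show ?thesis unfolding eq
  proof (rule esssup_I[OF meas], intro AE_I2 ennreal_leI)
    fix x
    have "\<bar>Re (VV N lam f t x)\<bar> \<le> norm (VV N lam f t x)" by (rule abs_Re_le_cmod)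
    also have "\<dots> \<le> (1 / (4 * pi\<^sup>2)) * (\<Sum>k\<in>KK N. norm (CC N lam f k t))" by (rule V_bound)
    finally show "\<bar>Re (VV N lam f t x)\<bar> \<le> (1 / (4 * pi\<^sup>2)) * (\<Sum>k\<in>KK N. norm (CC N lam f k t))" .
  qed
qed

definition WW :: "nat \<Rightarrow> int \<Rightarrow> real" where
  "WW N k = (if k = 0 then 2 * pi * (2 * real N + 1) else 2 * pi + 8 * sqrt (2 * real N) / of_int \<bar>k\<bar>)"

lemma S_fin: "finite (S_set N)" unfolding S_set_def by simp

lemma S_card: "card (S_set N) = 2 * N + 1" unfolding S_set_def by simp

lemma schur:
  assumes n: "n \<in> S_set N"
  shows "(\<Sum>n'\<in>S_set N. norm (II (alpha k n - alpha k n'))) \<le> WW N k"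
proof (cases "k = 0")
  case True
  have "(\<Sum>n'\<in>S_set N. norm (II (alpha k n - alpha k n'))) \<le> of_nat (card (S_set N)) * (2 * pi)"
    by (rule sum_bounded_above) (rule II_le1)
  then show ?thesis using True unfolding WW_def S_card by (simp add: algebra_simps)
next
  case False
  have "(\<Sum>n'\<in>S_set N. norm (II (alpha k n - alpha k n')))
      = norm (II (alpha k n - alpha k n)) + (\<Sum>n'\<in>S_set N - {n}. norm (II (alpha k n - alpha k n')))"
    by (rule sum.remove[OF S_fin n])
  also have "\<dots> \<le> 2 * pi + (\<Sum>n'\<in>S_set N - {n}. (2 / of_int \<bar>k\<bar>) * (1 / real_of_int \<bar>n - n'\<bar>))"
  proof (intro add_mono II_le1 sum_mono)
    fix n' assume n': "n' \<in> S_set N - {n}"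
    have pos: "0 < real_of_int (\<bar>k\<bar> * \<bar>n - n'\<bar>)" using n' False by auto
    have sep: "real_of_int (\<bar>k\<bar> * \<bar>n - n'\<bar>) \<le> \<bar>alpha k n - alpha k n'\<bar>" by (rule alpha_sep)
    then have ne: "alpha k n - alpha k n' \<noteq> 0" using pos by auto
    have "norm (II (alpha k n - alpha k n')) \<le> 2 / \<bar>alpha k n - alpha k n'\<bar>" by (rule II_le2[OF ne])
    also have "\<dots> \<le> 2 / real_of_int (\<bar>k\<bar> * \<bar>n - n'\<bar>)"
    proof (rule divide_left_mono[OF sep])
      have "0 < \<bar>alpha k n - alpha k n'\<bar>" using ne by simp
      then show "0 < \<bar>alpha k n - alpha k n'\<bar> * real_of_int (\<bar>k\<bar> * \<bar>n - n'\<bar>)"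
        using pos by (rule mult_pos_pos)
    qed simp
    also have "\<dots> = (2 / of_int \<bar>k\<bar>) * (1 / real_of_int \<bar>n - n'\<bar>)" by simp
    finally show "norm (II (alpha k n - alpha k n')) \<le> (2 / of_int \<bar>k\<bar>) * (1 / real_of_int \<bar>n - n'\<bar>)" .
  qed
  also have "\<dots> = 2 * pi + (2 / of_int \<bar>k\<bar>) * (\<Sum>n'\<in>S_set N - {n}. 1 / real_of_int \<bar>n - n'\<bar>)"
    by (simp add: sum_distrib_left)
  also have "\<dots> \<le> 2 * pi + (2 / of_int \<bar>k\<bar>) * (4 * sqrt (real (2 * N)))"
  proof -
    have "(\<Sum>n'\<in>S_set N - {n}. 1 / real_of_int \<bar>n - n'\<bar>) \<le> 4 * sqrt (real (2 * N))"
      by (rule hsum_int[OF S_fin]) (use n in \<open>auto simp: S_set_def\<close>)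
    then show ?thesis by (intro add_left_mono mult_left_mono) auto
  qed
  also have "\<dots> = WW N k" unfolding WW_def using False by simp
  finally show ?thesis .
qed

lemma KK_fin: "finite (KK N)" unfolding KK_def by simp

lemma Wsum:
  assumes "N \<ge> 1"
  shows "(\<Sum>k\<in>KK N. WW N k) \<le> 120 * real N"
proof -
  have z: "0 \<in> KK N" unfolding KK_def by simp
  have cK: "card (KK N - {0}) = 4 * N"
    using z KK_fin unfolding KK_def by (simp add: card_Diff_singleton)
  have "(\<Sum>k\<in>KK N. WW N k) = WW N 0 + (\<Sum>k\<in>KK N - {0}. WW N k)"
    by (rule sum.remove[OF KK_fin z])
  also have "(\<Sum>k\<in>KK N - {0}. WW N k) = (\<Sum>k\<in>KK N - {0}. 2 * pi + 8 * sqrt (2 * real N) * (1 / real_of_int \<bar>0 - k\<bar>))"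
    by (intro sum.cong refl) (auto simp: WW_def)
  also have "\<dots> = 2 * pi * real (4 * N) + 8 * sqrt (2 * real N) * (\<Sum>k\<in>KK N - {0}. 1 / real_of_int \<bar>0 - k\<bar>)"
    by (simp add: sum.distrib sum_distrib_left cK)
  also have "\<dots> \<le> 2 * pi * real (4 * N) + 8 * sqrt (2 * real N) * (4 * sqrt (real (2 * N)))"
  proof -
    have "(\<Sum>k\<in>KK N - {0}. 1 / real_of_int \<bar>0 - k\<bar>) \<le> 4 * sqrt (real (2 * N))"
      by (rule hsum_int[OF KK_fin]) (auto simp: KK_def)
    then show ?thesis by (intro add_left_mono mult_left_mono) auto
  qed
  also have "8 * sqrt (2 * real N) * (4 * sqrt (real (2 * N))) = 64 * real N"
  proof -
    have "sqrt (2 * real N) * sqrt (2 * real N) = 2 * real N" by simp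
    then show ?thesis by (simp add: algebra_simps)
  qed
  finally have "(\<Sum>k\<in>KK N. WW N k) \<le> 2 * pi * (2 * real N + 1) + 2 * pi * real (4 * N) + 64 * real N"
    unfolding WW_def by simp
  also have "\<dots> \<le> 2 * 4 * (2 * real N + 1) + 2 * 4 * real (4 * N) + 64 * real N"
    using pi_less_4 by (intro add_mono mult_right_mono) auto
  also have "\<dots> \<le> 120 * real N" using assms by simp
  finally show ?thesis .
qed

lemma W_pos: "0 < WW N k"
  unfolding WW_def by (auto intro!: add_pos_nonneg)

lemma W_ne: "WW N k \<noteq> 0"
  using W_pos[of N k] by simp

lemma time_bound:
  "integral {0..2*pi} (\<lambda>t. (norm (CC N lam f k t))\<^sup>2) \<le> WW N k * (\<Sum>n\<in>S_set N. (norm (bb N lam f k n))\<^sup>2)"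
  unfolding CC_def by (rule osc[OF S_fin schur])

lemma AA_frob:
  assumes ons: "orthonormal_system f" and M: "\<And>j. \<bar>lam j\<bar> \<le> M" and sl: "summable (\<lambda>j. (lam j)\<^sup>2)"
  shows "(\<Sum>n\<in>S_set N. \<Sum>m\<in>S_set N. (norm (AA lam f n m))\<^sup>2) \<le> (\<Sum>j. (lam j)\<^sup>2) / (4 * pi\<^sup>2)"
proof -
  let ?c = "\<lambda>j n. fourier_coeff (f j) n"
  let ?A = "\<lambda>J n m. \<Sum>j<J. of_real (lam j) * (?c j n * cnj (?c j m))"
  have lim: "(\<lambda>J. ?A J n m) \<longlonglongrightarrow> AA lam f n m" for n m
    unfolding AA_def by (rule summable_LIMSEQ[OF coef_summable[OF ons M]])
  have "(\<lambda>J. \<Sum>n\<in>S_set N. \<Sum>m\<in>S_set N. (norm (?A J n m))\<^sup>2)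
      \<longlonglongrightarrow> (\<Sum>n\<in>S_set N. \<Sum>m\<in>S_set N. (norm (AA lam f n m))\<^sup>2)"
    by (intro tendsto_sum tendsto_power tendsto_norm lim)
  moreover have "\<exists>N0. \<forall>J\<ge>N0. (\<Sum>n\<in>S_set N. \<Sum>m\<in>S_set N. (norm (?A J n m))\<^sup>2) \<le> (\<Sum>j. (lam j)\<^sup>2) / (4 * pi\<^sup>2)"
  proof (intro exI allI impI)
    fix J :: nat
    have "(\<Sum>n\<in>S_set N. \<Sum>m\<in>S_set N. (norm (?A J n m))\<^sup>2) \<le> (\<Sum>j<J. (lam j)\<^sup>2) / (4 * pi\<^sup>2)"
      by (rule frob_bound[OF S_fin vbessel[OF ons S_fin]])
    also have "\<dots> \<le> (\<Sum>j. (lam j)\<^sup>2) / (4 * pi\<^sup>2)"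
      by (intro divide_right_mono sum_le_suminf sl) auto
    finally show "(\<Sum>n\<in>S_set N. \<Sum>m\<in>S_set N. (norm (?A J n m))\<^sup>2) \<le> (\<Sum>j. (lam j)\<^sup>2) / (4 * pi\<^sup>2)" .
  qed
  ultimately show ?thesis by (rule LIMSEQ_le_const2)
qed

lemma bb_regroup:
  "(\<Sum>k\<in>KK N. \<Sum>n\<in>S_set N. (norm (bb N lam f k n))\<^sup>2) = (\<Sum>n\<in>S_set N. \<Sum>m\<in>S_set N. (norm (AA lam f n m))\<^sup>2)"
proof -
  have "(\<Sum>n\<in>S_set N. \<Sum>m\<in>S_set N. (norm (AA lam f n m))\<^sup>2)
     = (\<Sum>k\<in>KK N. \<Sum>n\<in>S_set N. if n - k \<in> S_set N then (norm (AA lam f n (n - k)))\<^sup>2 else 0)"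
    by (rule regroup) (auto simp: S_fin KK_fin KK_def S_set_def)
  also have "\<dots> = (\<Sum>k\<in>KK N. \<Sum>n\<in>S_set N. (norm (bb N lam f k n))\<^sup>2)"
    unfolding bb_def by (intro sum.cong refl) simp
  finally show ?thesis by simp
qed

lemma CC_cont: "continuous_on UNIV (\<lambda>t. CC N lam f k t)"
  unfolding CC_def by (intro continuous_intros)

theorem theorem1p6:
  fixes \<beta> :: real
  assumes "0 < \<beta>" and "\<beta> \<le> 2"
  shows "\<exists>C. \<forall>(N::nat) (lam::nat \<Rightarrow> real) (f::nat \<Rightarrow> real \<Rightarrow> complex).
           N \<ge> 1 \<longrightarrow> in_lp \<beta> lam \<longrightarrow> orthonormal_system f \<longrightarrow>
           L2Linf_norm_sq (\<lambda>t x. \<Sum>j. lam j * (norm (D_op N (f j) t x))\<^sup>2)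
             \<le> ennreal ((C * sqrt (real N) * lp_norm \<beta> lam)\<^sup>2)"
proof (intro exI allI impI)
  fix N :: nat and lam :: "nat \<Rightarrow> real" and f :: "nat \<Rightarrow> real \<Rightarrow> complex"
  assume N1: "N \<ge> 1" and lp: "in_lp \<beta> lam" and ons: "orthonormal_system f"
  define L where "L = lp_norm \<beta> lam"
  have M: "\<And>j. \<bar>lam j\<bar> \<le> L" unfolding L_def by (rule lp_facts(1)[OF assms lp])
  have sl: "summable (\<lambda>j. (lam j)\<^sup>2)" by (rule lp_facts(2)[OF assms lp])
  have slL: "(\<Sum>j. (lam j)\<^sup>2) \<le> L\<^sup>2" unfolding L_def by (rule lp_facts(3)[OF assms lp])
  define c0 where "c0 = 1 / (4 * pi\<^sup>2)"
  have c0_pos: "0 < c0" unfolding c0_def by simp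
  have c0_le1: "c0 \<le> 1"
  proof -
    have "3 * 3 \<le> pi * pi" using pi_gt3 by (intro mult_mono) auto
    then have "1 \<le> 4 * pi\<^sup>2" by (simp add: power2_eq_square)
    then show ?thesis unfolding c0_def by simp
  qed
  define Wt where "Wt = (\<Sum>k\<in>KK N. WW N k)"
  have Wt_le: "Wt \<le> 120 * real N" unfolding Wt_def by (rule Wsum[OF N1])
  have Wt0: "0 \<le> Wt" unfolding Wt_def by (intro sum_nonneg less_imp_le W_pos)
  define B where "B t = c0 * (\<Sum>k\<in>KK N. norm (CC N lam f k t))" for t
  define G where "G t = c0\<^sup>2 * Wt * (\<Sum>k\<in>KK N. (norm (CC N lam f k t))\<^sup>2 / WW N k)" for t
  have BG: "(B t)\<^sup>2 \<le> G t" for t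
  proof -
    have "(\<Sum>k\<in>KK N. norm (CC N lam f k t))\<^sup>2
        = (\<Sum>k\<in>KK N. sqrt (WW N k) * (norm (CC N lam f k t) / sqrt (WW N k)))\<^sup>2"
    proof (intro arg_cong[where f="\<lambda>x. x\<^sup>2"] sum.cong refl)
      fix k
      have "0 < sqrt (WW N k)" using W_pos[of N k] by simp
      then have "sqrt (WW N k) \<noteq> 0" by simp
      then show "norm (CC N lam f k t) = sqrt (WW N k) * (norm (CC N lam f k t) / sqrt (WW N k))" by simp
    qed
    also have "\<dots> \<le> (\<Sum>k\<in>KK N. (sqrt (WW N k))\<^sup>2) * (\<Sum>k\<in>KK N. (norm (CC N lam f k t) / sqrt (WW N k))\<^sup>2)"
      by (rule Cauchy_Schwarz_ineq_sum)
    also have "\<dots> = Wt * (\<Sum>k\<in>KK N. (norm (CC N lam f k t))\<^sup>2 / WW N k)"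
      unfolding Wt_def using W_pos by (simp add: power_divide less_imp_le)
    finally have "(\<Sum>k\<in>KK N. norm (CC N lam f k t))\<^sup>2 \<le> Wt * (\<Sum>k\<in>KK N. (norm (CC N lam f k t))\<^sup>2 / WW N k)" .
    then have "c0\<^sup>2 * (\<Sum>k\<in>KK N. norm (CC N lam f k t))\<^sup>2 \<le> c0\<^sup>2 * (Wt * (\<Sum>k\<in>KK N. (norm (CC N lam f k t))\<^sup>2 / WW N k))"
      by (rule mult_left_mono) simp
    then show ?thesis unfolding B_def G_def by (simp add: power_mult_distrib mult_ac)
  qed
  have G0: "0 \<le> G t" for t
    unfolding G_def using Wt0 W_pos by (intro mult_nonneg_nonneg sum_nonneg divide_nonneg_nonneg) (auto simp: less_imp_le)
  have Gcont: "continuous_on {0..2*pi} G"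
    unfolding G_def by (intro continuous_intros continuous_on_subset[OF CC_cont]) (auto simp: W_ne)
  have Gint: "(G has_integral integral {0..2*pi} G) {0..2*pi}"
    by (rule integrable_integral[OF integrable_continuous_interval[OF Gcont]])
  have step1: "L2Linf_norm_sq (\<lambda>t x. \<Sum>j. lam j * (norm (D_op N (f j) t x))\<^sup>2)
      \<le> (\<integral>\<^sup>+ t. ennreal (indicator {0..2*pi} t * G t) \<partial>lborel)"
    unfolding L2Linf_norm_sq_def
  proof (rule nn_integral_mono)
    fix t
    show "indicator torus t * (esssup (restrict_space lborel torus) (\<lambda>x. ennreal \<bar>\<Sum>j. lam j * (norm (D_op N (f j) t x))\<^sup>2\<bar>))\<^sup>2
        \<le> ennreal (indicator {0..2*pi} t * G t)"
    proof (cases "t \<in> torus")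
      case True
      then have t02: "t \<in> {0..2*pi}" unfolding torus_def by auto
      have "esssup (restrict_space lborel torus) (\<lambda>x. ennreal \<bar>\<Sum>j. lam j * (norm (D_op N (f j) t x))\<^sup>2\<bar>) \<le> ennreal (B t)"
        unfolding B_def c0_def by (rule esssup_bound[OF ons M])
      then have "(esssup (restrict_space lborel torus) (\<lambda>x. ennreal \<bar>\<Sum>j. lam j * (norm (D_op N (f j) t x))\<^sup>2\<bar>))\<^sup>2 \<le> (ennreal (B t))\<^sup>2"
        by (rule power_mono) simp
      also have "\<dots> = ennreal ((B t)\<^sup>2)"
      proof (rule ennreal_power)
        show "0 \<le> B t" unfolding B_def using c0_pos by (intro mult_nonneg_nonneg sum_nonneg) auto
      qed
      also have "\<dots> \<le> ennreal (G t)" by (rule ennreal_leI[OF BG])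
      finally show ?thesis using True t02 by simp
    qed simp
  qed
  also have "\<dots> = ennreal (integral {0..2*pi} G)"
    by (rule nn_integral_has_integral_lebesgue[OF _ Gint]) (rule G0)
  also have "integral {0..2*pi} G \<le> c0\<^sup>2 * Wt * (\<Sum>n\<in>S_set N. \<Sum>m\<in>S_set N. (norm (AA lam f n m))\<^sup>2)"
  proof -
    have "integral {0..2*pi} G = c0\<^sup>2 * Wt * (\<Sum>k\<in>KK N. integral {0..2*pi} (\<lambda>t. (norm (CC N lam f k t))\<^sup>2) / WW N k)"
    proof -
      have int: "(\<lambda>t. (norm (CC N lam f k t))\<^sup>2 / WW N k) integrable_on {0..2*pi}" for k
        by (intro integrable_continuous_interval continuous_intros continuous_on_subset[OF CC_cont]) (auto simp: W_ne)
      show ?thesis unfolding G_def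
        by (simp add: integral_sum[OF KK_fin int])
    qed
    also have "\<dots> \<le> c0\<^sup>2 * Wt * (\<Sum>k\<in>KK N. \<Sum>n\<in>S_set N. (norm (bb N lam f k n))\<^sup>2)"
    proof (intro mult_left_mono sum_mono)
      fix k
      have "integral {0..2*pi} (\<lambda>t. (norm (CC N lam f k t))\<^sup>2) \<le> WW N k * (\<Sum>n\<in>S_set N. (norm (bb N lam f k n))\<^sup>2)"
        by (rule time_bound)
      then show "integral {0..2*pi} (\<lambda>t. (norm (CC N lam f k t))\<^sup>2) / WW N k \<le> (\<Sum>n\<in>S_set N. (norm (bb N lam f k n))\<^sup>2)"
        using W_pos[of N k] by (simp add: divide_le_eq mult.commute)
    qed (use Wt0 in simp)
    also have "\<dots> = c0\<^sup>2 * Wt * (\<Sum>n\<in>S_set N. \<Sum>m\<in>S_set N. (norm (AA lam f n m))\<^sup>2)"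
      by (simp add: bb_regroup)
    finally show ?thesis .
  qed
  then have "ennreal (integral {0..2*pi} G) \<le> ennreal (c0\<^sup>2 * Wt * (\<Sum>n\<in>S_set N. \<Sum>m\<in>S_set N. (norm (AA lam f n m))\<^sup>2))"
    by (rule ennreal_leI)
  also have "c0\<^sup>2 * Wt * (\<Sum>n\<in>S_set N. \<Sum>m\<in>S_set N. (norm (AA lam f n m))\<^sup>2) \<le> 1 * (120 * real N) * (L\<^sup>2)"
  proof (intro mult_mono)
    show "c0\<^sup>2 \<le> 1" using c0_le1 c0_pos by (simp add: power_le_one)
    show "Wt \<le> 120 * real N" by (rule Wt_le)
    have "(\<Sum>n\<in>S_set N. \<Sum>m\<in>S_set N. (norm (AA lam f n m))\<^sup>2) \<le> (\<Sum>j. (lam j)\<^sup>2) / (4 * pi\<^sup>2)"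
      by (rule AA_frob[OF ons M sl])
    also have "\<dots> = c0 * (\<Sum>j. (lam j)\<^sup>2)" unfolding c0_def by simp
    also have "\<dots> \<le> 1 * L\<^sup>2" using c0_le1 c0_pos slL
      by (intro mult_mono) (auto intro: suminf_nonneg sl)
    finally show "(\<Sum>n\<in>S_set N. \<Sum>m\<in>S_set N. (norm (AA lam f n m))\<^sup>2) \<le> L\<^sup>2" by simp
  qed (use Wt0 in \<open>auto intro!: sum_nonneg\<close>)
  also have "1 * (120 * real N) * (L\<^sup>2) = (sqrt 120 * sqrt (real N) * lp_norm \<beta> lam)\<^sup>2"
    unfolding L_def by (simp add: power_mult_distrib)
  finally show "L2Linf_norm_sq (\<lambda>t x. \<Sum>j. lam j * (norm (D_op N (f j) t x))\<^sup>2)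
             \<le> ennreal ((sqrt 120 * sqrt (real N) * lp_norm \<beta> lam)\<^sup>2)"
    using ennreal_leI by blast
qed


end
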